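(* Let $\Lambda=(\lambda_i)_{i=0}^\infty$ be a strictly increasing sequence of non-negative reals with $\lambda_0=0$ and $\sum_{i=1}^\infty 1/\lambda_i<\infty$, and let $M(\Lambda)=\overline{\operatorname{span}}\{t^{\lambda_i}: i\geq 0\}\subseteq C[0,1]$ with the sup-norm. Then $M(\Lambda)$ is not locally octahedral.
   Context: $C[0,1]$ is the space of real-valued continuous functions on $[0,1]$ with the sup-norm. A Banach space $X$ with unit sphere $S_X$ is locally octahedral if for every $x\in S_X$ and every $\varepsilon>0$ there exists $y\in S_X$ such that $\|x\pm y\|>2-\varepsilon$. *)

theory Defs
  imports "HOL-Analysis.Analysis"
begin

text \<open>Elements of C[0,1] are represented by functions real to real, continuous on [0,1];
  only their values on [0,1] matter.\<close>

definition sup_norm01 :: "(real \<Rightarrow> real) \<Rightarrow> real" where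
  "sup_norm01 f = (SUP t\<in>{0..1}. \<bar>f t\<bar>)"

text \<open>The power function t to the a on [0,1], with the convention t to the 0 equal to 1
  (note that 0 powr 0 = 0 in Isabelle, hence the case distinction).\<close>
definition mpow :: "real \<Rightarrow> real \<Rightarrow> real" where
  "mpow a t = (if a = 0 then 1 else t powr a)"

text \<open>Closure in C[0,1] (sup-norm) of the linear span of the functions t to the lam i.\<close>
definition muntz_space :: "(nat \<Rightarrow> real) \<Rightarrow> (real \<Rightarrow> real) set" where
  "muntz_space lam = {f. continuous_on {0..1} f \<and>
     (\<forall>e>0. \<exists>(n::nat) (c::nat \<Rightarrow> real).
        \<forall>t\<in>{0..1}. \<bar>f t - (\<Sum>i<n. c i * mpow (lam i) t)\<bar> < e)}"

definition locally_octahedral01 :: "(real \<Rightarrow> real) set \<Rightarrow> bool" where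
  "locally_octahedral01 X \<longleftrightarrow>
     (\<forall>x\<in>X. sup_norm01 x = 1 \<longrightarrow>
        (\<forall>\<epsilon>>0. \<exists>y\<in>X. sup_norm01 y = 1 \<and>
            sup_norm01 (\<lambda>t. x t + y t) > 2 - \<epsilon> \<and>
            sup_norm01 (\<lambda>t. x t - y t) > 2 - \<epsilon>))"

end

theory Submission
  imports Defs "HOL-Complex_Analysis.Complex_Analysis"
begin

lemma exp_split_aux:
  fixes l y s :: real assumes "0 < s"
  shows "exp ((of_real l + \<i> * of_real y) * of_real (ln s)) = of_real (s powr l) * exp (\<i> * of_real (y * ln s))"
proof -
  have "(of_real l + \<i> * of_real y) * of_real (ln s) = of_real (l * ln s) + \<i> * of_real (y * ln s)"
    by (simp add: algebra_simps)
  moreover have "exp (of_real (l * ln s)) = (of_real (exp (l * ln s)) :: complex)"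
    by (rule exp_of_real)
  ultimately show ?thesis using assms by (simp add: exp_add powr_def)
qed

lemma mellin_pow:
  fixes l y :: real assumes "0 \<le> l"
  shows "((\<lambda>s. of_real (s powr l) * exp (\<i> * of_real (y * ln s))) has_integral
           (1 / (of_real (l+1) + \<i> * of_real y))) {0..1}"
proof -
  define c where "c = of_real (l+1) + \<i> * of_real y"
  have c0: "c \<noteq> 0" using assms by (auto simp: c_def complex_eq_iff)
  define F where "F s = of_real (s powr (l+1)) * exp (\<i> * of_real (y * ln s)) / c" for s
  have F1: "F 1 = 1/c" by (simp add: F_def)
  have F0: "F 0 = 0" by (simp add: F_def)
  have nexp: "norm (exp (\<i> * of_real r)) = 1" for r :: real
    by (simp add: norm_exp_i_times)
  have cont: "continuous_on {0..1} F"
  proof (clarsimp simp: continuous_on_eq_continuous_within)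
    fix x :: real assume x: "0 \<le> x" "x \<le> 1"
    show "continuous (at x within {0..1}) F"
    proof (cases "x = 0")
      case True
      have "(F \<longlongrightarrow> 0) (at 0 within {0..1})"
      proof (rule Lim_null_comparison)
        show "\<forall>\<^sub>F s in at 0 within {0..1}. norm (F s) \<le> s powr (l+1) / norm c"
          by (rule always_eventually) (simp add: F_def norm_divide norm_mult nexp)
        show "((\<lambda>s. s powr (l+1) / norm c) \<longlongrightarrow> 0) (at 0 within {0..1})"
        proof -
          have "((\<lambda>s::real. s powr (l+1)) \<longlongrightarrow> 0) (at 0 within {0..1})"
          proof (rule tendsto_zero_powrI)
            show "((\<lambda>s::real. s) \<longlongrightarrow> 0) (at 0 within {0..1})" by (rule tendsto_ident_at)
            show "((\<lambda>s::real. l + 1) \<longlongrightarrow> l + 1) (at 0 within {0..1})" by simp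
            show "\<forall>\<^sub>F s in at 0 within {0..1}. 0 \<le> (s::real)" by (auto simp: eventually_at_filter)
            show "0 < l + 1" using assms by simp
          qed
          then show ?thesis by (auto intro: tendsto_divide_zero)
        qed
      qed
      then show ?thesis using True F0 by (simp add: continuous_within)
    next
      case False
      then have xp: "0 < x" using x by simp
      have "isCont F x" unfolding F_def
        using xp c0 by (intro continuous_intros) auto
      then show ?thesis by (simp add: continuous_at_imp_continuous_at_within)
    qed
  qed
  have der: "(F has_vector_derivative (of_real (s powr l) * exp (\<i> * of_real (y * ln s)))) (at s)"
    if s: "s \<in> {0<..<1}" for s
  proof -
    define Fc where "Fc w = exp (c * Ln w) / c" for w
    have sp: "0 < s" using s by simp
    have d: "(Fc has_field_derivative (exp (c * Ln (of_real s)) * (c * inverse (of_real s)) / c)) (at (of_real s))"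
      unfolding Fc_def using sp
      by (auto intro!: derivative_eq_intros simp: complex_nonpos_Reals_iff)
    have eqv: "exp (c * Ln (of_real s)) * (c * inverse (of_real s)) / c = of_real (s powr l) * exp (\<i> * of_real (y * ln s))"
    proof -
      have "exp (c * Ln (of_real s)) = of_real (s powr (l+1)) * exp (\<i> * of_real (y * ln s))"
        using exp_split_aux[OF sp, of "l+1" y] sp by (simp add: c_def Ln_of_real)
      moreover have "s powr (l+1) = s * s powr l" using sp by (simp add: powr_add)
      ultimately show ?thesis using c0 sp by (simp add: field_simps)
    qed
    have "((\<lambda>x. Fc (of_real x)) has_vector_derivative (of_real (s powr l) * exp (\<i> * of_real (y * ln s)))) (at s)"
      using has_vector_derivative_real_field[OF d] eqv by simp
    then show ?thesis
    proof (rule has_vector_derivative_transform_within_open[where S="{0<..}"])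
      show "open {0::real<..}" by simp
      show "s \<in> {0<..}" using sp by simp
      fix x :: real assume "x \<in> {0<..}"
      then have xp: "0 < x" by simp
      show "Fc (of_real x) = F x"
        unfolding Fc_def F_def using exp_split_aux[OF xp, of "l+1" y] xp by (simp add: c_def Ln_of_real)
    qed
  qed
  have "((\<lambda>s. of_real (s powr l) * exp (\<i> * of_real (y * ln s))) has_integral (F 1 - F 0)) {0..1}"
    by (rule fundamental_theorem_of_calculus_interior) (use cont der in auto)
  then show ?thesis using F1 F0 by (simp add: c_def)
qed

lemma Q_imag_bound:
  fixes F :: "nat set" and lam a :: "nat \<Rightarrow> real"
  assumes fin: "finite F" and lpos: "\<And>k. k \<in> F \<Longrightarrow> 0 \<le> lam k"
    and qb: "\<And>s. s \<in> {0..1} \<Longrightarrow> \<bar>\<Sum>k\<in>F. a k * s powr lam k\<bar> \<le> m"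
  shows "norm (\<Sum>k\<in>F. of_real (a k) / (\<i> * of_real y + of_real (lam k + 1))) \<le> m"
proof -
  have hi: "((\<lambda>s. \<Sum>k\<in>F. of_real (a k) * (of_real (s powr lam k) * exp (\<i> * of_real (y * ln s))))
          has_integral (\<Sum>k\<in>F. of_real (a k) * (1 / (of_real (lam k+1) + \<i> * of_real y)))) {0..1}"
    by (intro has_integral_sum fin has_integral_mult_right mellin_pow lpos)
  have eq: "(\<Sum>k\<in>F. of_real (a k) * (1 / (of_real (lam k+1) + \<i> * of_real y))) =
      (\<Sum>k\<in>F. of_real (a k) / (\<i> * of_real y + of_real (lam k + 1)))"
    by (intro sum.cong) (auto simp: add.commute)
  have nb: "norm (\<Sum>k\<in>F. of_real (a k) * (of_real (s powr lam k) * exp (\<i> * of_real (y * ln s)))) \<le> m"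
    if "s \<in> cbox 0 1" for s :: real
  proof -
    have e: "(\<Sum>k\<in>F. of_real (a k) * (of_real (s powr lam k) * exp (\<i> * of_real (y * ln s))))
        = of_real (\<Sum>k\<in>F. a k * s powr lam k) * exp (\<i> * of_real (y * ln s))"
      by (simp add: sum_distrib_right mult.assoc)
    have "norm (of_real (\<Sum>k\<in>F. a k * s powr lam k) * exp (\<i> * of_real (y * ln s))) = \<bar>\<Sum>k\<in>F. a k * s powr lam k\<bar>"
      by (simp only: norm_mult norm_exp_i_times norm_of_real mult_1_right)
    then show ?thesis unfolding e using qb that by simp
  qed
  have "m \<ge> 0" using qb[of 0] by (smt (verit) atLeastAtMost_iff)
  have "norm (\<Sum>k\<in>F. of_real (a k) * (1 / (of_real (lam k+1) + \<i> * of_real y))) \<le> m"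
    using has_integral_bound[OF \<open>m \<ge> 0\<close> hi[unfolded cbox_interval[symmetric]] nb] by simp
  then show ?thesis using eq by simp
qed

definition Qf :: "nat set \<Rightarrow> (nat \<Rightarrow> real) \<Rightarrow> (nat \<Rightarrow> real) \<Rightarrow> complex \<Rightarrow> complex" where
  "Qf F lam a z = (\<Sum>k\<in>F. of_real (a k) / (z + of_real (lam k + 1)))"
definition Bf :: "nat set \<Rightarrow> (nat \<Rightarrow> real) \<Rightarrow> complex \<Rightarrow> complex" where
  "Bf F lam z = (\<Prod>k\<in>F. (z + of_real (lam k + 1)) / (z - of_real (lam k + 1)))"
definition Rf :: "nat set \<Rightarrow> (nat \<Rightarrow> real) \<Rightarrow> (nat \<Rightarrow> real) \<Rightarrow> complex \<Rightarrow> complex" where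
  "Rf F lam a z = (\<Sum>k\<in>F. of_real (a k) * (\<Prod>j\<in>F-{k}. (z + of_real (lam j + 1)))) /
                  (\<Prod>j\<in>F. (z - of_real (lam j + 1)))"

lemma R_eq_QB:
  assumes fin: "finite F" and nz: "\<And>k. k \<in> F \<Longrightarrow> z + of_real (lam k + 1) \<noteq> 0"
    and nz2: "\<And>k. k \<in> F \<Longrightarrow> z - of_real (lam k + 1) \<noteq> 0"
  shows "Rf F lam a z = Qf F lam a z * Bf F lam z"
proof -
  have "Qf F lam a z * (\<Prod>j\<in>F. (z + of_real (lam j + 1))) =
        (\<Sum>k\<in>F. of_real (a k) * (\<Prod>j\<in>F-{k}. (z + of_real (lam j + 1))))"
    unfolding Qf_def sum_distrib_right
  proof (rule sum.cong)
    fix k assume k: "k \<in> F"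
    have "(\<Prod>j\<in>F. (z + of_real (lam j + 1))) = (z + of_real (lam k + 1)) * (\<Prod>j\<in>F-{k}. (z + of_real (lam j + 1)))"
      using prod.remove[OF fin k] by simp
    then show "of_real (a k) / (z + of_real (lam k + 1)) * (\<Prod>j\<in>F. (z + of_real (lam j + 1))) =
         of_real (a k) * (\<Prod>j\<in>F-{k}. (z + of_real (lam j + 1)))"
      using nz[OF k] by simp
  qed simp
  then show ?thesis unfolding Rf_def Bf_def prod_dividef times_divide_eq_right by simp
qed

lemma norm_plus_le_minus:
  fixes z :: complex and c :: real
  assumes "0 \<le> c" "Re z \<le> 0"
  shows "norm (z + of_real c) \<le> norm (z - of_real c)"
proof -
  have "(Re z + c)^2 + (Im z)^2 \<le> (Re z - c)^2 + (Im z)^2"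
  proof -
    have "(Re z + c)^2 - (Re z - c)^2 = 4 * (Re z * c)" by (simp add: power2_eq_square algebra_simps)
    moreover have "Re z * c \<le> 0" using assms by (simp add: mult_nonpos_nonneg)
    ultimately show ?thesis by linarith
  qed
  then show ?thesis unfolding cmod_def by (simp add: real_sqrt_le_iff)
qed

lemma norm_plus_eq_minus:
  fixes c y :: real
  shows "norm (\<i> * of_real y + of_real c) = norm (\<i> * of_real y - of_real c)"
  unfolding cmod_def by (simp add: power2_eq_square)

lemma B_le1:
  assumes fin: "finite F" and lpos: "\<And>k. k \<in> F \<Longrightarrow> 0 \<le> lam k" and z: "Re z \<le> 0"
  shows "norm (Bf F lam z) \<le> 1"
  unfolding Bf_def prod_norm[symmetric]
proof (rule prod_le_1)
  fix k assume k: "k \<in> F"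
  have ne: "z - of_real (lam k + 1) \<noteq> 0" using z lpos[OF k]
    by (auto simp: complex_eq_iff)
  show "0 \<le> norm ((z + of_real (lam k + 1)) / (z - of_real (lam k + 1))) \<and> norm ((z + of_real (lam k + 1)) / (z - of_real (lam k + 1))) \<le> 1"
    using norm_plus_le_minus[of "lam k + 1" z] lpos[OF k] z ne by (simp add: norm_divide divide_le_eq_1)
qed

lemma Rf_holo:
  assumes fin: "finite F" and lpos: "\<And>k. k \<in> F \<Longrightarrow> 0 \<le> lam k"
  shows "Rf F lam a holomorphic_on {w. Re w < 1}"
proof -
  have "(\<Prod>j\<in>F. (w - of_real (lam j + 1))) \<noteq> 0" if "Re w < 1" for w
  proof -
    have "w - of_real (lam j + 1) \<noteq> 0" if j: "j \<in> F" for j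
      using lpos[OF j] \<open>Re w < 1\<close> by (auto simp: complex_eq_iff)
    then show ?thesis using fin by (simp add: prod_zero_iff)
  qed
  then show ?thesis unfolding Rf_def by (intro holomorphic_intros) auto
qed

lemma norm_Qf_le:
  assumes fin: "finite F" and d: "0 < d" and dist: "\<And>k. k \<in> F \<Longrightarrow> d \<le> norm (w + of_real (lam k + 1))"
  shows "norm (Qf F lam a w) \<le> (\<Sum>k\<in>F. \<bar>a k\<bar>) / d"
proof -
  have "norm (Qf F lam a w) \<le> (\<Sum>k\<in>F. norm (of_real (a k) / (w + of_real (lam k + 1))))"
    unfolding Qf_def by (rule norm_sum)
  also have "\<dots> \<le> (\<Sum>k\<in>F. \<bar>a k\<bar> / d)"
  proof (rule sum_mono)
    fix k assume k: "k \<in> F"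
    have pos: "0 < norm (w + of_real (lam k + 1)) * d" using dist[OF k] d by (meson mult_pos_pos less_le_trans)
    have "\<bar>a k\<bar> / norm (w + of_real (lam k + 1)) \<le> \<bar>a k\<bar> / d"
      by (rule divide_left_mono[OF dist[OF k] abs_ge_zero pos])
    then show "norm (of_real (a k) / (w + of_real (lam k + 1))) \<le> \<bar>a k\<bar> / d"
      by (simp only: norm_divide norm_of_real)
  qed
  also have "\<dots> = (\<Sum>k\<in>F. \<bar>a k\<bar>) / d" by (simp add: sum_divide_distrib)
  finally show ?thesis .
qed

lemma R_bound:
  assumes fin: "finite F" and lpos: "\<And>k. k \<in> F \<Longrightarrow> 0 \<le> lam k"
    and qim: "\<And>y. norm (Qf F lam a (\<i> * of_real y)) \<le> m"
    and z: "Re z \<le> 0"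
  shows "norm (Rf F lam a z) \<le> m"
proof (rule field_le_epsilon)
  fix e :: real assume e: "0 < e"
  have m0: "0 \<le> m" using qim[of 0] by (meson norm_ge_zero order_trans)
  define A where "A = (\<Sum>k\<in>F. \<bar>a k\<bar>)"
  define C where "C = (\<Sum>k\<in>F. lam k + 1)"
  have A0: "0 \<le> A" unfolding A_def by (simp add: sum_nonneg)
  have Ck: "lam k + 1 \<le> C" if "k \<in> F" for k
    unfolding C_def using that fin lpos by (intro member_le_sum) (auto intro: add_nonneg_pos)
  define L where "L = \<bar>Re z\<bar> + \<bar>Im z\<bar> + C + 1 + A / e"
  have Ae: "A / e \<ge> 0" using A0 e by simp
  define S where "S = cbox (Complex (-L) (-L)) (Complex 0 L)"
  have hol: "Rf F lam a holomorphic_on S"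
  proof (rule holomorphic_on_subset[OF Rf_holo[OF fin lpos]])
    show "S \<subseteq> {w. Re w < 1}" unfolding S_def by (auto simp: in_cbox_complex_iff)
  qed
  have C0: "0 \<le> C" unfolding C_def using lpos by (intro sum_nonneg) (simp add: add_nonneg_nonneg)
  have zS: "z \<in> S" unfolding S_def L_def using z Ae C0
    by (auto simp: in_cbox_complex_iff)
  show "norm (Rf F lam a z) \<le> m + e"
  proof (rule maximum_modulus_frontier[where S = S and f = "Rf F lam a" and \<xi> = z and B = "m + e"])
    show "Rf F lam a holomorphic_on interior S" using hol interior_subset holomorphic_on_subset by blast
    show "continuous_on (closure S) (Rf F lam a)" unfolding S_def
      using hol holomorphic_on_imp_continuous_on S_def by simp
    show "bounded S" unfolding S_def by simp
    show "z \<in> S" by (rule zS)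
    fix w assume "w \<in> frontier S"
    then have wc: "-L \<le> Re w" "Re w \<le> 0" "-L \<le> Im w" "Im w \<le> L"
      and wb: "\<not> (-L < Re w \<and> Re w < 0 \<and> -L < Im w \<and> Im w < L)"
      unfolding S_def frontier_cbox by (auto simp: in_cbox_complex_iff in_box_complex_iff)
    have nz1: "w - of_real (lam k + 1) \<noteq> 0" if "k \<in> F" for k
      using wc lpos[OF that] by (auto simp: complex_eq_iff)
    have B1: "norm (Bf F lam w) \<le> 1" by (rule B_le1[OF fin lpos wc(2)])
    show "norm (Rf F lam a w) \<le> m + e"
    proof (cases "Re w = 0")
      case True
      then have ww: "w = \<i> * of_real (Im w)" by (simp add: complex_eq_iff)
      have nz2: "w + of_real (lam k + 1) \<noteq> 0" if "k \<in> F" for k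
        using True lpos[OF that] by (auto simp: complex_eq_iff)
      have "norm (Rf F lam a w) = norm (Qf F lam a w) * norm (Bf F lam w)"
        using R_eq_QB[OF fin nz2 nz1] by (simp add: norm_mult)
      also have "\<dots> \<le> norm (Qf F lam a w)" using B1 by (simp add: mult_left_le)
      also have "\<dots> \<le> m" using qim[of "Im w"] ww by simp
      finally show ?thesis using e by simp
    next
      case False
      then have side: "Re w = -L \<or> Im w = -L \<or> Im w = L" using wc wb by linarith
      have dist: "L - C \<le> norm (w + of_real (lam k + 1))" if k: "k \<in> F" for k
      proof -
        have c: "0 \<le> lam k" "lam k + 1 \<le> C" using lpos[OF k] Ck[OF k] by auto
        have "L - C \<le> \<bar>Re (w + of_real (lam k + 1))\<bar> \<or> L - C \<le> \<bar>Im (w + of_real (lam k + 1))\<bar>"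
          using side c Ae unfolding L_def by auto
        then show ?thesis using abs_Re_le_cmod abs_Im_le_cmod order_trans by blast
      qed
      have LC: "0 < L - C" unfolding L_def using Ae by simp
      have nz2: "w + of_real (lam k + 1) \<noteq> 0" if "k \<in> F" for k
        using dist[OF that] LC by auto
      have "norm (Rf F lam a w) = norm (Qf F lam a w) * norm (Bf F lam w)"
        using R_eq_QB[OF fin nz2 nz1] by (simp add: norm_mult)
      also have "\<dots> \<le> norm (Qf F lam a w)" using B1 by (simp add: mult_left_le)
      also have "\<dots> \<le> A / (L - C)" unfolding A_def by (rule norm_Qf_le[OF fin LC dist])
      also have "\<dots> \<le> e"
      proof -
        have "A / e \<le> L - C" unfolding L_def using Ae by simp
        then have "A \<le> e * (L - C)" using e by (simp add: divide_le_eq mult.commute)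
        then show ?thesis using LC by (simp add: divide_le_eq mult.commute)
      qed
      finally show ?thesis using m0 by simp
    qed
  qed
qed

lemma ratio_bound:
  fixes z :: complex and lam l1 v :: real
  assumes l1: "0 < l1" "l1 \<le> lam"
    and v: "v = -1 - Re z" "l1/2 \<le> v" and y: "v - l1/2 \<le> \<bar>Im z\<bar>"
  shows "norm (z - of_real (lam + 1)) \<le> exp (16*(1+1/l1)*(1+v)/lam) * norm (z + of_real (lam + 1))"
    and "lam^2/8 \<le> (norm (z + of_real (lam + 1)))^2"
proof -
  define c where "c = lam + 1"
  define N where "N = (Re z - c)^2 + (Im z)^2"
  define D where "D = (Re z + c)^2 + (Im z)^2"
  define X where "X = 32*(1+1/l1)*(1+v)/lam"
  define w where "w = v - l1/2"
  have w0: "0 \<le> w" using v unfolding w_def by simp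
  have lp: "0 < lam" using l1 by simp
  have yw: "w^2 \<le> (Im z)^2" using y w0 unfolding w_def
    by (metis abs_le_square_iff abs_of_nonneg)
  have "Re z + c = lam - v" using v(1) unfolding c_def by simp
  then have Dre: "D = (lam - v)^2 + (Im z)^2" unfolding D_def by simp
  have a1: "(lam - l1/2 - w)^2 + w^2 \<ge> (lam - l1/2)^2 / 2"
  proof -
    have "0 \<le> (lam - l1/2 - 2*w)^2" by simp
    moreover have "(lam - l1/2 - w)^2 + w^2 - (lam - l1/2)^2 / 2 = (lam - l1/2 - 2*w)^2 / 2"
      by (simp add: power2_eq_square field_simps) 
    ultimately show ?thesis by linarith
  qed
  have a2: "(lam - l1/2)^2 \<ge> (lam/2)^2"
    using l1 by (intro power_mono) auto
  have Dlow: "D \<ge> lam^2/8"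
  proof -
    have "(lam - v)^2 = (lam - l1/2 - w)^2" unfolding w_def by (simp add: algebra_simps)
    then have "D \<ge> (lam - l1/2 - w)^2 + w^2" using Dre yw by linarith
    then show ?thesis using a1 a2 by (simp add: power2_eq_square)
  qed
  have rz: "Re z = -1 - v" using v by simp
  have ND: "N = D + 4*(1+v)*(lam+1)" unfolding N_def D_def c_def rz
    by (simp add: power2_eq_square algebra_simps)
  have v1: "0 \<le> 1 + v" using v l1 by simp
  have l1p: "0 \<le> 1 + 1/l1" using l1 by simp
  have X0: "0 \<le> X" unfolding X_def using v1 l1p lp by (intro divide_nonneg_pos mult_nonneg_nonneg) auto
  have key: "4*(1+v)*(lam+1) \<le> X * D"
  proof -
    have "X * (lam^2/8) = 4*(1+1/l1)*(1+v)*lam" unfolding X_def using lp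
      by (simp add: power2_eq_square field_simps)
    moreover have "(1+1/l1)*lam \<ge> lam + 1"
    proof -
      have "lam / l1 \<ge> 1" using l1 by simp
      then show ?thesis by (simp add: algebra_simps)
    qed
    moreover have "X * (lam^2/8) \<le> X * D" using Dlow X0 by (intro mult_left_mono) auto
    moreover have "0 \<le> 1 + v" using v l1 by simp
    ultimately have "4*(1+v)*(lam+1) \<le> 4*(1+v)*((1+1/l1)*lam)"
      by (intro mult_left_mono) auto
    also have "\<dots> = 4*(1+1/l1)*(1+v)*lam" by (simp only: mult.commute mult.left_commute mult.assoc)
    also have "\<dots> = X * (lam^2/8)" using \<open>X * (lam^2/8) = 4*(1+1/l1)*(1+v)*lam\<close> by simp
    also have "\<dots> \<le> X * D" by fact
    finally show ?thesis .
  qed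
  have "N \<le> D * exp X"
  proof -
    have "1 + X \<le> exp X" by (rule exp_ge_add_one_self)
    moreover have "D \<ge> 0" unfolding D_def by simp
    ultimately have "D * (1 + X) \<le> D * exp X" by (intro mult_left_mono) auto
    then show ?thesis using ND key by (simp add: algebra_simps)
  qed
  then have "sqrt N \<le> sqrt D * sqrt (exp X)" by (simp add: real_sqrt_mult[symmetric])
  moreover have "sqrt (exp X) = exp (X/2)"
    by (metis exp_ge_zero exp_double real_sqrt_abs2 abs_of_nonneg field_sum_of_halves power2_eq_square mult_2 exp_add)
  moreover have "norm (z - of_real c) = sqrt N" unfolding N_def cmod_def by simp
  moreover have "norm (z + of_real c) = sqrt D" unfolding D_def cmod_def by simp
  moreover have "X/2 = 16*(1+1/l1)*(1+v)/lam" unfolding X_def using lp by (simp add: field_simps)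
  ultimately show "norm (z - of_real (lam + 1)) \<le> exp (16*(1+1/l1)*(1+v)/lam) * norm (z + of_real (lam + 1))"
    unfolding c_def by (simp add: mult.commute)
  have "(norm (z + of_real c))^2 = D" unfolding D_def cmod_def by simp
  then show "lam^2/8 \<le> (norm (z + of_real (lam + 1)))^2" using Dlow unfolding c_def by simp
qed

lemma Q_wedge_bound:
  assumes fin: "finite F" and l1: "0 < l1" and lk: "\<And>k. k \<in> F \<Longrightarrow> l1 \<le> lam k"
    and qim: "\<And>y. norm (Qf F lam a (\<i> * of_real y)) \<le> m"
    and Ssum: "(\<Sum>k\<in>F. 1 / lam k) \<le> S"
    and v: "v = -1 - Re z" "l1/2 \<le> v" "v - l1/2 \<le> \<bar>Im z\<bar>"
  shows "norm (Qf F lam a z) \<le> m * exp (16*(1+1/l1)*S*(1+v))"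
proof -
  have lpos: "0 \<le> lam k" if "k \<in> F" for k using lk[OF that] l1 by simp
  have m0: "0 \<le> m" using qim[of 0] by (meson norm_ge_zero order_trans)
  have rz: "Re z \<le> 0" using v l1 by simp
  define E where "E k = 16*(1+1/l1)*(1+v)/lam k" for k
  have rb: "norm (z - of_real (lam k + 1)) \<le> exp (E k) * norm (z + of_real (lam k + 1))"
    and rb2: "lam k^2/8 \<le> (norm (z + of_real (lam k + 1)))^2" if k: "k \<in> F" for k
    using ratio_bound[OF l1 lk[OF k] v] unfolding E_def by auto
  have pp: "0 < norm (z + of_real (lam k + 1))" if k: "k \<in> F" for k
  proof -
    have "0 < lam k^2/8" using lk[OF k] l1 by simp
    then have "0 < (norm (z + of_real (lam k + 1)))^2" using rb2[OF k] by linarith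
    then show ?thesis by (simp add: zero_less_power2)
  qed
  have nz1: "z + of_real (lam k + 1) \<noteq> 0" if "k \<in> F" for k using pp[OF that] by auto
  have nz2: "z - of_real (lam k + 1) \<noteq> 0" if "k \<in> F" for k
    using rz lpos[OF that] by (auto simp: complex_eq_iff)
  define Pp where "Pp = (\<Prod>k\<in>F. norm (z + of_real (lam k + 1)))"
  define Pm where "Pm = (\<Prod>k\<in>F. norm (z - of_real (lam k + 1)))"
  have Pp0: "0 < Pp" unfolding Pp_def using pp by (intro prod_pos) auto
  have Pm0: "0 < Pm" unfolding Pm_def using nz2 by (intro prod_pos) auto
  have nB: "norm (Bf F lam z) = Pp / Pm"
    unfolding Bf_def Pp_def Pm_def prod_dividef norm_divide prod_norm by simp
  have "norm (Rf F lam a z) \<le> m" by (rule R_bound[OF fin lpos qim rz])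
  then have "norm (Qf F lam a z) * (Pp / Pm) \<le> m"
    using R_eq_QB[OF fin nz1 nz2, where a=a] nB by (simp add: norm_mult)
  then have q1: "norm (Qf F lam a z) * Pp \<le> m * Pm" using Pm0 by (simp add: field_simps)
  have "Pm \<le> (\<Prod>k\<in>F. exp (E k) * norm (z + of_real (lam k + 1)))"
    unfolding Pm_def using rb by (intro prod_mono) auto
  also have "\<dots> = exp (\<Sum>k\<in>F. E k) * Pp" unfolding Pp_def prod.distrib exp_sum[OF fin] ..
  finally have "Pm \<le> exp (\<Sum>k\<in>F. E k) * Pp" .
  then have "m * Pm \<le> m * (exp (\<Sum>k\<in>F. E k) * Pp)" using m0 by (intro mult_left_mono) auto
  with q1 have "norm (Qf F lam a z) * Pp \<le> (m * exp (\<Sum>k\<in>F. E k)) * Pp" by simp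
  then have q2: "norm (Qf F lam a z) \<le> m * exp (\<Sum>k\<in>F. E k)" using Pp0 by simp
  have "(\<Sum>k\<in>F. E k) = 16*(1+1/l1)*(1+v) * (\<Sum>k\<in>F. 1 / lam k)"
    unfolding E_def sum_distrib_left by simp
  also have "\<dots> \<le> 16*(1+1/l1)*(1+v) * S"
  proof (rule mult_left_mono[OF Ssum])
    have "0 \<le> 1 + v" "0 \<le> 1 + 1/l1" using v l1 by auto
    then show "0 \<le> 16*(1+1/l1)*(1+v)" by simp
  qed
  finally have "exp (\<Sum>k\<in>F. E k) \<le> exp (16*(1+1/l1)*S*(1+v))" by (simp add: mult.commute mult.left_commute)
  then show ?thesis using q2 m0 by (meson mult_left_mono order_trans)
qed

lemma in_triangle:
  fixes X sig r :: real
  assumes X: "0 < X" and r: "sig < r" "r < sig + X"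
  shows "Complex (-(1+r)) 0 \<in> interior (convex hull {Complex (-(1+sig)) 0, Complex (-(1+sig+X)) X, Complex (-(1+sig+X)) (-X)})"
proof -
  define U where "U = {w. -(1+sig+X) < Re w \<and> Re w < -(1+sig) \<and> \<bar>Im w\<bar> < -(1+sig) - Re w}"
  have "open U" unfolding U_def
    by (intro open_Collect_conj open_Collect_less continuous_intros)
  moreover have "Complex (-(1+r)) 0 \<in> U" unfolding U_def using r by auto
  moreover have "U \<subseteq> convex hull {Complex (-(1+sig)) 0, Complex (-(1+sig+X)) X, Complex (-(1+sig+X)) (-X)}"
  proof
    fix w assume "w \<in> U"
    then have w: "-(1+sig+X) < Re w" "Re w < -(1+sig)" "\<bar>Im w\<bar> < -(1+sig) - Re w" unfolding U_def by auto
    define ww where "ww = -(1+sig) - Re w"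
    define th where "th = ww / X"
    define vp where "vp = (th + Im w / X) / 2"
    define vm where "vm = (th - Im w / X) / 2"
    have ww: "0 < ww" "ww < X" using w unfolding ww_def by auto
    have th: "0 < th" "th < 1" using ww X unfolding th_def by auto
    have "\<bar>Im w / X\<bar> < th" using w X unfolding th_def ww_def by (simp add: divide_strict_right_mono)
    then have "- th < Im w / X" "Im w / X < th" by linarith+
    then have vpm: "0 \<le> vp" "0 \<le> vm" unfolding vp_def vm_def by auto
    have sum1: "(1 - th) + vp + vm = 1" unfolding vp_def vm_def by (simp add: field_simps)
    have weq: "w = (1 - th) *\<^sub>R Complex (-(1+sig)) 0 + vp *\<^sub>R Complex (-(1+sig+X)) X + vm *\<^sub>R Complex (-(1+sig+X)) (-X)"
    proof (rule complex_eqI)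
      have "vp + vm = th" unfolding vp_def vm_def by (simp add: field_simps)
      moreover have "th * X = ww" unfolding th_def using X by simp
      ultimately show "Re w = Re ((1 - th) *\<^sub>R Complex (-(1+sig)) 0 + vp *\<^sub>R Complex (-(1+sig+X)) X + vm *\<^sub>R Complex (-(1+sig+X)) (-X))"
      proof -
        have "Re ((1 - th) *\<^sub>R Complex (-(1+sig)) 0 + vp *\<^sub>R Complex (-(1+sig+X)) X + vm *\<^sub>R Complex (-(1+sig+X)) (-X))
              = (1 - th) * (-(1+sig)) + (vp + vm) * (-(1+sig+X))" by (simp add: algebra_simps)
        also have "\<dots> = -(1+sig) - th * X" using \<open>vp + vm = th\<close> by (simp add: algebra_simps)
        finally show ?thesis using \<open>th * X = ww\<close> unfolding ww_def by simp
      qed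
      have "vp * X - vm * X = Im w" unfolding vp_def vm_def using X by (simp add: field_simps)
      then show "Im w = Im ((1 - th) *\<^sub>R Complex (-(1+sig)) 0 + vp *\<^sub>R Complex (-(1+sig+X)) X + vm *\<^sub>R Complex (-(1+sig+X)) (-X))"
        by simp
    qed
    then show "w \<in> convex hull {Complex (-(1+sig)) 0, Complex (-(1+sig+X)) X, Complex (-(1+sig+X)) (-X)}"
      unfolding convex_hull_3 using th vpm sum1 weq by (intro CollectI exI[of _ "1 - th"] exI[of _ vp] exI[of _ vm]) auto
  qed
  ultimately show ?thesis using interior_maximal by blast
qed

definition Ef :: "real \<Rightarrow> complex \<Rightarrow> complex" where
  "Ef t w = exp (-(w + 1) * of_real (ln t))"

definition tri :: "real \<Rightarrow> real \<Rightarrow> real \<Rightarrow> complex" where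
  "tri sig X = linepath (Complex (-(1+sig)) 0) (Complex (-(1+sig+X)) X) +++
               linepath (Complex (-(1+sig+X)) X) (Complex (-(1+sig+X)) (-X)) +++
               linepath (Complex (-(1+sig+X)) (-X)) (Complex (-(1+sig)) 0)"

lemma pole_integral:
  fixes X sig r t :: real
  assumes X: "0 < X" and r: "sig < r" "r < sig + X" and t: "0 < t"
  shows "((\<lambda>w. Ef t w / (w - Complex (-(1+r)) 0)) has_contour_integral (2*pi*\<i> * of_real (t powr r))) (tri sig X)"
proof -
  define p where "p = Complex (-(1+r)) 0"
  define z0 where "z0 = Complex (-(1+sig)) 0"
  define zp where "zp = Complex (-(1+sig+X)) X"
  define zm where "zm = Complex (-(1+sig+X)) (-X)"
  have pin: "p \<in> interior (convex hull {z0, zp, zm})"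
    unfolding p_def z0_def zp_def zm_def by (rule in_triangle[OF X r])
  have "Im ((zp - z0) * cnj (zp - p)) = X * (r - sig)"
    unfolding zp_def z0_def p_def by (simp add: algebra_simps)
  then have pos: "0 < Im ((zp - z0) * cnj (zp - p))" using X r by simp
  have wn: "winding_number (tri sig X) p = 1"
    using winding_number_triangle[OF pin] pos unfolding tri_def z0_def zp_def zm_def by simp
  have "p \<notin> closed_segment z0 zp \<union> closed_segment zp zm \<union> closed_segment zm z0"
    using pin interior_of_triangle[of z0 zp zm] by auto
  then have pnot: "p \<notin> path_image (tri sig X)"
    unfolding tri_def z0_def zp_def zm_def by (simp add: path_image_join)
  have "((\<lambda>w. Ef t w / (w - p)) has_contour_integral (2*pi*\<i> * winding_number (tri sig X) p * Ef t p)) (tri sig X)"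
  proof (rule Cauchy_integral_formula_convex_simple[where S = UNIV])
    show "convex (UNIV :: complex set)" by simp
    show "Ef t holomorphic_on UNIV" unfolding Ef_def by (intro holomorphic_intros)
    show "p \<in> interior UNIV" by simp
    show "valid_path (tri sig X)" unfolding tri_def by (simp add: valid_path_join)
    show "path_image (tri sig X) \<subseteq> UNIV - {p}" using pnot by auto
    show "pathfinish (tri sig X) = pathstart (tri sig X)" unfolding tri_def by simp
  qed
  moreover have "Ef t p = of_real (t powr r)"
  proof -
    have e: "-(p + 1) * of_real (ln t) = of_real (r * ln t)" unfolding p_def by (simp add: complex_eq_iff)
    have "Ef t p = exp (of_real (r * ln t))" unfolding Ef_def e by (rule refl)
    also have "\<dots> = of_real (exp (r * ln t))" by (rule exp_of_real)
    also have "\<dots> = of_real (t powr r)" using t by (simp add: powr_def)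
    finally show ?thesis .
  qed
  ultimately show ?thesis using wn unfolding p_def by simp
qed

lemma contour_identity:
  assumes fin: "finite F" and lk: "\<And>k. k \<in> F \<Longrightarrow> sig < lam k \<and> lam k < sig + X"
    and X: "0 < X" and t: "0 < t"
  shows "((\<lambda>w. Qf F lam a w * Ef t w) has_contour_integral (2*pi*\<i> * of_real (\<Sum>k\<in>F. a k * t powr lam k))) (tri sig X)"
proof -
  have "((\<lambda>w. \<Sum>k\<in>F. of_real (a k) * (Ef t w / (w - Complex (-(1+lam k)) 0))) has_contour_integral
          (\<Sum>k\<in>F. of_real (a k) * (2*pi*\<i> * of_real (t powr lam k)))) (tri sig X)"
    using lk by (intro has_contour_integral_sum fin has_contour_integral_lmul pole_integral X t) auto
  moreover have "(\<lambda>w. \<Sum>k\<in>F. of_real (a k) * (Ef t w / (w - Complex (-(1+lam k)) 0))) = (\<lambda>w. Qf F lam a w * Ef t w)"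
  proof
    fix w
    have "w - Complex (-(1+lam k)) 0 = w + of_real (lam k + 1)" for k by (simp add: complex_eq_iff)
    then show "(\<Sum>k\<in>F. of_real (a k) * (Ef t w / (w - Complex (-(1+lam k)) 0))) = Qf F lam a w * Ef t w"
      unfolding Qf_def sum_distrib_right by (intro sum.cong) auto
  qed
  moreover have "(\<Sum>k\<in>F. of_real (a k) * (2*pi*\<i> * of_real (t powr lam k))) = 2*pi*\<i> * of_real (\<Sum>k\<in>F. a k * t powr lam k)"
    by (simp add: sum_distrib_left mult.commute mult.left_commute)
  ultimately show ?thesis by simp
qed

lemma norm_Ef: "norm (Ef t w) = exp (-(Re w + 1) * ln t)"
  unfolding Ef_def by simp

lemma exp_integral:
  fixes c :: real assumes "0 < c"
  shows "((\<lambda>u. exp (- c * u)) has_integral ((1 - exp (-c)) / c)) {0..1}"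
proof -
  have "((\<lambda>u. exp (- c * u)) has_integral ((\<lambda>u. - exp (- c * u) / c) 1 - (\<lambda>u. - exp (- c * u) / c) 0)) {0..1}"
  proof (rule fundamental_theorem_of_calculus)
    fix x :: real assume "x \<in> {0..1}"
    show "((\<lambda>u. - exp (- c * u) / c) has_vector_derivative exp (- c * x)) (at x within {0..1})"
      unfolding has_real_derivative_iff_has_vector_derivative[symmetric]
      using assms by (auto intro!: derivative_eq_intros)
  qed simp
  then show ?thesis using assms by (simp add: field_simps)
qed

lemma slant_bound:
  fixes s X sig t m D :: real
  assumes s: "\<bar>s\<bar> = 1" and X: "0 < X" and t: "0 < t" and sig: "0 \<le> sig"
    and D: "0 < D" and tD: "ln t \<le> - 2 * D" and m0: "0 \<le> m"
    and Qb: "\<And>z v. v = -1 - Re z \<Longrightarrow> sig \<le> v \<Longrightarrow> v - sig \<le> \<bar>Im z\<bar> \<Longrightarrow> norm (Q z) \<le> m * exp (D * (1 + v))"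
    and cont: "continuous_on (closed_segment (Complex (-(1+sig)) 0) (Complex (-(1+sig+X)) (s*X))) Q"
  shows "norm (contour_integral (linepath (Complex (-(1+sig)) 0) (Complex (-(1+sig+X)) (s*X))) (\<lambda>w. Q w * Ef t w))
          \<le> sqrt 2 * m * exp (D * (1 + sig)) * exp (sig * ln t) / D"
proof -
  define a where "a = Complex (-(1+sig)) 0"
  define b where "b = Complex (-(1+sig+X)) (s*X)"
  define f where "f w = Q w * Ef t w" for w
  define beta where "beta = - (D + ln t)"
  have beta: "D \<le> beta" unfolding beta_def using tD by simp
  define K0 where "K0 = sqrt 2 * m * exp (D * (1 + sig)) * exp (sig * ln t)"
  have K00: "0 \<le> K0" unfolding K0_def using m0 by simp
  have contf: "continuous_on (closed_segment a b) f"
    unfolding f_def Ef_def a_def b_def by (intro continuous_intros cont)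
  have hI: "(f has_contour_integral (contour_integral (linepath a b) f)) (linepath a b)"
    by (intro has_contour_integral_integral contour_integrable_continuous_linepath contf)
  then have hI2: "((\<lambda>u. f (linepath a b u) * (b - a)) has_integral (contour_integral (linepath a b) f)) {0..1}"
    by (simp add: has_contour_integral_linepath)
  have nba: "norm (b - a) = sqrt 2 * X"
  proof -
    have "b - a = Complex (-X) (s*X)" unfolding a_def b_def by (simp add: complex_eq_iff)
    then have "norm (b - a) = sqrt (X^2 + (s*X)^2)" by (simp add: cmod_def)
    also have "(s*X)^2 = X^2" using s by (simp add: power_mult_distrib abs_eq_iff power2_eq_square) (metis abs_mult_self_eq mult_1)
    finally show ?thesis using X by (simp add: real_sqrt_mult)
  qed
  have gi: "((\<lambda>u. K0 * (X * exp (- (beta * X) * u))) has_integral (K0 * (X * ((1 - exp (-(beta*X))) / (beta * X))))) {0..1}"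
    using beta D X by (intro has_integral_mult_right exp_integral) auto
  have pw: "norm (f (linepath a b u) * (b - a)) \<le> K0 * (X * exp (- (beta * X) * u))" if u: "u \<in> {0..1}" for u
  proof -
    define z where "z = linepath a b u"
    have zre: "Re z = -(1+sig) - u * X" and zim: "Im z = u * s * X"
      unfolding z_def linepath_def a_def b_def by (simp_all add: algebra_simps)
    define v where "v = sig + u * X"
    have v: "v = -1 - Re z" "sig \<le> v" "v - sig \<le> \<bar>Im z\<bar>"
      using zre zim u X s unfolding v_def by (auto simp: abs_mult)
    have "norm (f z) \<le> m * exp (D * (1 + v)) * exp (v * ln t)"
    proof -
      have e: "-(Re z + 1) * ln t = v * ln t" using v(1) by simp
      show ?thesis unfolding f_def norm_mult norm_Ef e
        by (rule mult_right_mono[OF Qb[OF v]]) simp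
    qed
    also have "\<dots> = m * exp (D * (1 + sig)) * exp (sig * ln t) * exp (- (beta * X) * u)"
      unfolding v_def beta_def by (simp add: exp_add[symmetric] algebra_simps)
    finally have "norm (f z) * norm (b - a) \<le> (m * exp (D * (1 + sig)) * exp (sig * ln t) * exp (- (beta * X) * u)) * norm (b - a)"
      by (rule mult_right_mono) simp
    then have "norm (f z) * norm (b - a) \<le> (m * exp (D * (1 + sig)) * exp (sig * ln t) * exp (- (beta * X) * u)) * (sqrt 2 * X)"
      unfolding nba .
    moreover have "(m * exp (D * (1 + sig)) * exp (sig * ln t) * exp (- (beta * X) * u)) * (sqrt 2 * X) = K0 * (X * exp (- (beta * X) * u))"
      unfolding K0_def by (simp add: algebra_simps)
    ultimately show ?thesis unfolding z_def norm_mult by linarith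
  qed
  have "norm (contour_integral (linepath a b) f) \<le> K0 * (X * ((1 - exp (-(beta*X))) / (beta * X)))"
    using integral_norm_bound_integral[OF has_integral_integrable[OF hI2] has_integral_integrable[OF gi] pw,
      unfolded integral_unique[OF hI2] integral_unique[OF gi]] .
  also have "\<dots> \<le> K0 / beta"
  proof -
    have "X * ((1 - exp (-(beta*X))) / (beta * X)) = (1 - exp (-(beta*X))) / beta" using X by simp
    also have "\<dots> \<le> 1 / beta" using beta D by (intro divide_right_mono) auto
    finally show ?thesis using K00 by (metis mult.right_neutral mult_left_mono times_divide_eq_right)
  qed
  also have "\<dots> \<le> K0 / D" using beta D K00 by (intro divide_left_mono) auto
  finally show ?thesis unfolding K0_def a_def b_def f_def by simp
qed

lemma Qf_cont:
  assumes fin: "finite F" and nz: "\<And>z k. z \<in> T \<Longrightarrow> k \<in> F \<Longrightarrow> z + of_real (lam k + 1) \<noteq> 0"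
  shows "continuous_on T (Qf F lam a)"
  unfolding Qf_def using nz by (intro continuous_intros) auto

lemma seg_param:
  assumes "z \<in> closed_segment p q"
  obtains u where "0 \<le> u" "u \<le> 1" "z = linepath p q u"
  using assms unfolding closed_segment_def linepath_def by auto

lemma left_bound:
  assumes fin: "finite F" and lpos: "\<And>k. k \<in> F \<Longrightarrow> 0 \<le> lam k"
    and Xk: "\<And>k. k \<in> F \<Longrightarrow> lam k + 1 \<le> X" and sig: "0 \<le> sig" and t: "0 < t"
  shows "norm (contour_integral (linepath (Complex (-(1+sig+X)) X) (Complex (-(1+sig+X)) (-X))) (\<lambda>w. Qf F lam a w * Ef t w))
     \<le> (\<Sum>k\<in>F. \<bar>a k\<bar>) * exp ((sig + X) * ln t) * (2 * \<bar>X\<bar>)"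
proof -
  define p where "p = Complex (-(1+sig+X)) X"
  define q where "q = Complex (-(1+sig+X)) (-X)"
  have re: "Re z = -(1+sig+X)" if zs: "z \<in> closed_segment p q" for z
  proof -
    obtain u where u: "0 \<le> u" "u \<le> 1" "z = linepath p q u" using seg_param[OF zs] by blast
    have "Re (linepath p q u) = -(1+sig+X)" unfolding p_def q_def linepath_def by (simp add: algebra_simps)
    then show ?thesis using u(3) by simp
  qed
  have dist: "1 \<le> norm (z + of_real (lam k + 1))" if "z \<in> closed_segment p q" "k \<in> F" for z k
  proof -
    have "1 \<le> \<bar>Re (z + of_real (lam k + 1))\<bar>" using re[OF that(1)] Xk[OF that(2)] sig by simp
    then show ?thesis using abs_Re_le_cmod order_trans by blast
  qed
  have nz: "z + of_real (lam k + 1) \<noteq> 0" if "z \<in> closed_segment p q" "k \<in> F" for z k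
    using dist[OF that] by auto
  have contf: "continuous_on (closed_segment p q) (\<lambda>w. Qf F lam a w * Ef t w)"
    unfolding Ef_def by (intro continuous_intros Qf_cont[OF fin] nz) auto
  have hI: "((\<lambda>w. Qf F lam a w * Ef t w) has_contour_integral (contour_integral (linepath p q) (\<lambda>w. Qf F lam a w * Ef t w))) (linepath p q)"
    by (intro has_contour_integral_integral contour_integrable_continuous_linepath contf)
  have "norm (contour_integral (linepath p q) (\<lambda>w. Qf F lam a w * Ef t w)) \<le> ((\<Sum>k\<in>F. \<bar>a k\<bar>) * exp ((sig + X) * ln t)) * norm (q - p)"
  proof (rule has_contour_integral_bound_linepath[OF hI])
    show "0 \<le> (\<Sum>k\<in>F. \<bar>a k\<bar>) * exp ((sig + X) * ln t)" by (simp add: sum_nonneg)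
    fix z assume z: "z \<in> closed_segment p q"
    have "norm (Qf F lam a z) \<le> (\<Sum>k\<in>F. \<bar>a k\<bar>) / 1"
      by (rule norm_Qf_le[OF fin]) (use dist[OF z] in auto)
    moreover have "norm (Ef t z) = exp ((sig + X) * ln t)" unfolding norm_Ef using re[OF z] by simp
    ultimately show "norm (Qf F lam a z * Ef t z) \<le> (\<Sum>k\<in>F. \<bar>a k\<bar>) * exp ((sig + X) * ln t)"
      by (simp add: norm_mult mult_right_mono)
  qed
  moreover have "norm (q - p) = 2 * \<bar>X\<bar>"
  proof -
    have "q - p = Complex 0 (-2*X)" unfolding p_def q_def by (simp add: complex_eq_iff)
    moreover have "sqrt (4 * X^2) = 2 * \<bar>X\<bar>" by (simp add: real_sqrt_mult)
    ultimately show ?thesis by (simp add: cmod_def)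
  qed
  ultimately show ?thesis unfolding p_def q_def by simp
qed

lemma slant_nz:
  assumes s: "\<bar>s\<bar> = 1" and X: "0 < X" and sig: "0 \<le> sig" "sig < lamk"
    and z: "z \<in> closed_segment (Complex (-(1+sig)) 0) (Complex (-(1+sig+X)) (s*X))"
  shows "z + of_real (lamk + 1) \<noteq> 0"
proof -
  obtain u where u: "0 \<le> u" "u \<le> 1" "z = linepath (Complex (-(1+sig)) 0) (Complex (-(1+sig+X)) (s*X)) u"
    using seg_param[OF z] by blast
  have "Re (linepath (Complex (-(1+sig)) 0) (Complex (-(1+sig+X)) (s*X)) u) = -(1+sig) - u*X"
    "Im (linepath (Complex (-(1+sig)) 0) (Complex (-(1+sig+X)) (s*X)) u) = u * (s * X)"
    unfolding linepath_def by (simp_all add: algebra_simps)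
  then have re: "Re z = -(1+sig) - u*X" and im: "Im z = u * (s * X)" using u(3) by simp_all
  show ?thesis
  proof (cases "u = 0")
    case True
    then have "Re (z + of_real (lamk + 1)) = lamk - sig" using re by simp
    then have "Re (z + of_real (lamk + 1)) \<noteq> 0" using sig by simp
    then show ?thesis by (metis zero_complex.sel(1))
  next
    case False
    then have "Im z \<noteq> 0" using im s X by auto
    then show ?thesis by (auto simp: complex_eq_iff)
  qed
qed

lemma key_finite:
  fixes F :: "nat set" and lam a :: "nat \<Rightarrow> real" and l1 S m t :: real
  assumes fin: "finite F" and l1: "0 < l1" and lk: "\<And>k. k \<in> F \<Longrightarrow> l1 \<le> lam k"
    and qb: "\<And>s. s \<in> {0..1} \<Longrightarrow> \<bar>\<Sum>k\<in>F. a k * s powr lam k\<bar> \<le> m"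
    and Ssum: "(\<Sum>k\<in>F. 1 / lam k) \<le> S" and S0: "0 < S"
    and t: "0 < t" and tD: "ln t \<le> - 2 * (16*(1+1/l1)*S)"
  shows "\<bar>\<Sum>k\<in>F. a k * t powr lam k\<bar> \<le>
           sqrt 2 * exp (16*(1+1/l1)*S*(1+l1/2)) / (pi * (16*(1+1/l1)*S)) * m * t powr (l1/2)"
proof (rule field_le_epsilon)
  fix eta :: real assume eta: "0 < eta"
  define D where "D = 16*(1+1/l1)*S"
  define sig where "sig = l1/2"
  have D0: "0 < D" unfolding D_def using l1 S0 by (simp add: add_pos_pos)
  have sig0: "0 \<le> sig" "0 < sig" unfolding sig_def using l1 by auto
  have siglk: "sig < lam k" if "k \<in> F" for k using lk[OF that] l1 unfolding sig_def by simp
  have lpos: "0 \<le> lam k" if "k \<in> F" for k using lk[OF that] l1 by simp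
  have tD': "ln t \<le> - 2 * D" using tD unfolding D_def .
  have "ln t < 0" using tD' D0 by linarith
  then have t1: "t < 1" using t by simp
  have m0: "0 \<le> m" using qb[of 0] by (smt (verit) atLeastAtMost_iff)
  have qim: "norm (Qf F lam a (\<i> * of_real y)) \<le> m" for y
    unfolding Qf_def by (rule Q_imag_bound[OF fin lpos qb])
  have Qb: "norm (Qf F lam a z) \<le> m * exp (D * (1 + v))"
    if "v = -1 - Re z" "sig \<le> v" "v - sig \<le> \<bar>Im z\<bar>" for z v
    using Q_wedge_bound[OF fin l1 lk qim Ssum, of v z] that unfolding D_def sig_def by (simp add: mult.assoc)
  define A where "A = (\<Sum>k\<in>F. \<bar>a k\<bar>)"
  have A0: "0 \<le> A" unfolding A_def by (simp add: sum_nonneg)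
  define C where "C = (\<Sum>k\<in>F. lam k + 1)"
  have Ck: "lam k + 1 \<le> C" if "k \<in> F" for k
    unfolding C_def using that fin lpos by (intro member_le_sum) (auto intro: add_nonneg_pos)
  have C0: "0 \<le> C" unfolding C_def using lpos by (intro sum_nonneg) (simp add: add_nonneg_nonneg)
  define ep where "ep = pi * eta / (A + 1)"
  have ep0: "0 < ep" unfolding ep_def using eta A0 by simp
  have lim: "(\<lambda>n. of_nat n * t ^ n) \<longlonglongrightarrow> (0::real)"
    by (rule powser_times_n_limit_0) (use t t1 in simp)
  have ev1: "eventually (\<lambda>n. \<bar>of_nat n * t ^ n\<bar> < ep) sequentially"
    by (rule order_tendstoD(2)[OF tendsto_rabs_zero[OF lim] ep0])
  have ev2: "eventually (\<lambda>n. C + 1 \<le> real n) sequentially"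
  proof (rule eventually_sequentiallyI[of "nat \<lceil>C + 1\<rceil>"])
    fix n assume "nat \<lceil>C + 1\<rceil> \<le> n"
    then have "real (nat \<lceil>C + 1\<rceil>) \<le> real n" by simp
    moreover have "C + 1 \<le> real (nat \<lceil>C + 1\<rceil>)" by (rule real_nat_ceiling_ge)
    ultimately show "C + 1 \<le> real n" by linarith
  qed
  obtain n where n1: "\<bar>of_nat n * t ^ n\<bar> < ep" and n2: "C + 1 \<le> real n"
    using eventually_conj[OF ev1 ev2] unfolding eventually_sequentially by blast
  define X where "X = real n"
  have X0: "0 < X" unfolding X_def using n2 C0 by linarith
  have lkX: "sig < lam k \<and> lam k < sig + X" if "k \<in> F" for k
    using siglk[OF that] Ck[OF that] n2 sig0 unfolding X_def by linarith
  have Xk: "lam k + 1 \<le> X" if "k \<in> F" for k using Ck[OF that] n2 unfolding X_def by linarith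
  define f where "f w = Qf F lam a w * Ef t w" for w
  define z0 where "z0 = Complex (-(1+sig)) 0"
  define zp where "zp = Complex (-(1+sig+X)) X"
  define zm where "zm = Complex (-(1+sig+X)) (-X)"
  have ci: "(f has_contour_integral (2*pi*\<i> * of_real (\<Sum>k\<in>F. a k * t powr lam k)))
      (linepath z0 zp +++ linepath zp zm +++ linepath zm z0)"
    using contour_identity[OF fin lkX X0 t, where a=a] unfolding f_def tri_def z0_def zp_def zm_def .
  then have sum3: "contour_integral (linepath z0 zp) f + contour_integral (linepath zp zm) f +
      contour_integral (linepath zm z0) f = 2*pi*\<i> * of_real (\<Sum>k\<in>F. a k * t powr lam k)"
    by (rule has_chain_integral_chain_integral3)
  define Kc where "Kc = sqrt 2 * m * exp (D * (1 + sig)) * exp (sig * ln t) / D"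
  have cont_s: "continuous_on (closed_segment (Complex (-(1+sig)) 0) (Complex (-(1+sig+X)) (s*X))) (Qf F lam a)"
    if "\<bar>s\<bar> = 1" for s
    by (rule Qf_cont[OF fin]) (rule slant_nz[OF that X0 sig0(1) siglk])
  have I1: "norm (contour_integral (linepath z0 zp) f) \<le> Kc"
    using slant_bound[of 1 X t sig D m "Qf F lam a", OF _ X0 t sig0(1) D0 tD' m0 Qb cont_s]
    unfolding Kc_def f_def z0_def zp_def by simp
  have I3': "norm (contour_integral (linepath z0 zm) f) \<le> Kc"
    using slant_bound[of "-1" X t sig D m "Qf F lam a", OF _ X0 t sig0(1) D0 tD' m0 Qb cont_s]
    unfolding Kc_def f_def z0_def zm_def by simp
  have contm: "continuous_on (closed_segment zm z0) f"
  proof -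
    have "continuous_on (closed_segment z0 zm) (Qf F lam a)"
      using cont_s[of "-1"] unfolding z0_def zm_def by simp
    then have "continuous_on (closed_segment z0 zm) f" unfolding f_def Ef_def by (intro continuous_intros)
    then show ?thesis by (simp add: closed_segment_commute)
  qed
  have I3: "norm (contour_integral (linepath zm z0) f) \<le> Kc"
    using I3' contour_integral_reverse_linepath[OF contm] by simp
  have I2: "norm (contour_integral (linepath zp zm) f) \<le> 2 * pi * eta"
  proof -
    have "norm (contour_integral (linepath zp zm) f) \<le> A * exp ((sig + X) * ln t) * (2 * \<bar>X\<bar>)"
      using left_bound[OF fin lpos Xk sig0(1) t, where a=a] unfolding A_def f_def zp_def zm_def .
    also have "exp ((sig + X) * ln t) \<le> t ^ n"
    proof -
      have "exp ((sig + X) * ln t) = exp (sig * ln t) * exp (X * ln t)" by (simp add: distrib_right exp_add)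
      moreover have "exp (sig * ln t) \<le> 1" using sig0 t t1 by (simp add: mult_nonneg_nonpos)
      moreover have "exp (X * ln t) = t ^ n" unfolding X_def using t by (simp add: exp_of_nat_mult)
      ultimately show ?thesis using t by (simp add: mult_left_le_one_le)
    qed
    then have "A * exp ((sig + X) * ln t) * (2 * \<bar>X\<bar>) \<le> A * t ^ n * (2 * \<bar>X\<bar>)"
      using A0 by (intro mult_right_mono mult_left_mono) auto
    also have "\<dots> = 2 * A * \<bar>of_nat n * t ^ n\<bar>" unfolding X_def using t by (simp add: abs_mult)
    also have "\<dots> \<le> 2 * A * ep" using n1 A0 by (intro mult_left_mono) auto
    also have "\<dots> \<le> 2 * pi * eta"
    proof -
      have "A * ep = pi * eta * (A / (A + 1))" unfolding ep_def using A0 by (simp add: field_simps)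
      also have "\<dots> \<le> pi * eta * 1" using A0 eta by (intro mult_left_mono) auto
      finally show ?thesis by simp
    qed
    finally show ?thesis .
  qed
  have "norm (2*pi*\<i> * of_real (\<Sum>k\<in>F. a k * t powr lam k)) \<le> Kc + 2 * pi * eta + Kc"
  proof -
    have "norm (contour_integral (linepath z0 zp) f + contour_integral (linepath zp zm) f + contour_integral (linepath zm z0) f)
      \<le> norm (contour_integral (linepath z0 zp) f) + norm (contour_integral (linepath zp zm) f) + norm (contour_integral (linepath zm z0) f)"
      by (meson norm_triangle_le norm_triangle_ineq add_right_mono order_trans)
    note h = this[unfolded sum3]
    show ?thesis using h I1 I2 I3 by linarith
  qed
  then have "2 * pi * \<bar>\<Sum>k\<in>F. a k * t powr lam k\<bar> \<le> 2 * Kc + 2 * pi * eta"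
    by (simp only: norm_mult norm_of_real norm_ii) (simp add: abs_of_nonneg)
  then have "\<bar>\<Sum>k\<in>F. a k * t powr lam k\<bar> \<le> Kc / pi + eta"
    by (simp add: field_simps)
  moreover have "Kc / pi = sqrt 2 * exp (16*(1+1/l1)*S*(1+l1/2)) / (pi * (16*(1+1/l1)*S)) * m * t powr (l1/2)"
    unfolding Kc_def D_def sig_def using t by (simp add: powr_def field_simps)
  ultimately show "\<bar>\<Sum>k\<in>F. a k * t powr lam k\<bar> \<le> sqrt 2 * exp (16*(1+1/l1)*S*(1+l1/2)) / (pi * (16*(1+1/l1)*S)) * m * t powr (l1/2) + eta"
    by simp
qed

lemma P_split:
  fixes lam c :: "nat \<Rightarrow> real"
  assumes l0: "lam 0 = 0" and lp: "\<And>i. 1 \<le> i \<Longrightarrow> 0 < lam i"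
  shows "(\<Sum>i<n. c i * mpow (lam i) s) = (if n = 0 then 0 else c 0) + (\<Sum>k\<in>{1..<n}. c k * s powr lam k)"
proof (cases n)
  case 0 then show ?thesis by simp
next
  case (Suc m)
  have e: "{..<n} = insert 0 {1..<n}" using Suc by auto
  have "(\<Sum>i<n. c i * mpow (lam i) s) = c 0 * mpow (lam 0) s + (\<Sum>k\<in>{1..<n}. c k * mpow (lam k) s)"
    unfolding e by (subst sum.insert) auto
  also have "(\<Sum>k\<in>{1..<n}. c k * mpow (lam k) s) = (\<Sum>k\<in>{1..<n}. c k * s powr lam k)"
  proof (rule sum.cong)
    fix k assume "k \<in> {1..<n}"
    then have "lam k \<noteq> 0" using lp[of k] by auto
    then show "c k * mpow (lam k) s = c k * s powr lam k" by (simp add: mpow_def)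
  qed simp
  finally show ?thesis using Suc l0 by (simp add: mpow_def)
qed

lemma bdd_abs_cont:
  fixes f :: "real \<Rightarrow> real"
  assumes "continuous_on {0..1} f"
  shows "bdd_above ((\<lambda>t. \<bar>f t\<bar>) ` {0..1})"
proof -
  have "continuous_on {0..1} (\<lambda>t. \<bar>f t\<bar>)" using assms by (intro continuous_intros)
  then have "compact ((\<lambda>t. \<bar>f t\<bar>) ` {0..1})" by (intro compact_continuous_image) auto
  then show ?thesis by (intro bounded_imp_bdd_above compact_imp_bounded)
qed

lemma sum_inv_le:
  fixes lam :: "nat \<Rightarrow> real"
  assumes summ: "summable (\<lambda>i. 1 / lam (Suc i))" and lp: "\<And>i. 1 \<le> i \<Longrightarrow> 0 < lam i"
  shows "(\<Sum>k\<in>{1..<n}. 1 / lam k) \<le> suminf (\<lambda>i. 1 / lam (Suc i))"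
proof (cases n)
  case 0 then show ?thesis using summ lp by (simp add: suminf_nonneg less_imp_le)
next
  case (Suc m)
  have "(\<Sum>k\<in>{1..<n}. 1 / lam k) = (\<Sum>i\<in>{0..<m}. 1 / lam (Suc i))"
    unfolding Suc using sum.shift_bounds_Suc_ivl[of "\<lambda>k. 1 / lam k" 0 m] by simp
  also have "\<dots> \<le> suminf (\<lambda>i. 1 / lam (Suc i))"
    by (rule sum_le_suminf[OF summ]) (use lp in \<open>auto intro: less_imp_le\<close>)
  finally show ?thesis .
qed

lemma M_bound:
  fixes lam :: "nat \<Rightarrow> real" and y :: "real \<Rightarrow> real"
  assumes sm: "strict_mono lam" and l0: "lam 0 = 0"
    and summ: "summable (\<lambda>i. 1 / lam (Suc i))"
    and yM: "y \<in> muntz_space lam" and yb: "\<And>s. s \<in> {0..1} \<Longrightarrow> \<bar>y s\<bar> \<le> 1"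
    and t: "0 \<le> t" "t \<le> exp (- 2 * (16*(1+1/lam 1)* suminf (\<lambda>i. 1 / lam (Suc i))))"
  shows "\<bar>y t - y 0\<bar> \<le> 2 * (sqrt 2 * exp (16*(1+1/lam 1)* suminf (\<lambda>i. 1 / lam (Suc i))*(1+lam 1/2))
            / (pi * (16*(1+1/lam 1)* suminf (\<lambda>i. 1 / lam (Suc i))))) * t powr (lam 1/2)"
proof -
  define S where "S = suminf (\<lambda>i. 1 / lam (Suc i))"
  define l1 where "l1 = lam 1"
  define K where "K = sqrt 2 * exp (16*(1+1/l1)*S*(1+l1/2)) / (pi * (16*(1+1/l1)*S))"
  have lp: "0 < lam i" if "1 \<le> i" for i
    using sm l0 that by (metis strict_monoD le_less_trans not_one_le_zero zero_less_iff_neq_zero le_numeral_extra(4) gr0I)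
  have l1p: "0 < l1" unfolding l1_def using lp by simp
  have lk: "l1 \<le> lam k" if "k \<in> {1..<n}" for k n
    using that sm unfolding l1_def by (auto simp: strict_mono_less_eq)
  have S0: "0 < S" unfolding S_def
    by (rule suminf_pos[OF summ]) (use lp in auto)
  have K0: "0 \<le> K" unfolding K_def using l1p S0 by simp
  have "0 \<le> 16*(1+1/l1)*S" using l1p S0 by simp
  then have "exp (- 2 * (16*(1+1/l1)*S)) \<le> 1" by simp
  then have t1: "t \<le> 1" using t(2) unfolding S_def l1_def by linarith
  show ?thesis
  proof (cases "t = 0")
    case True then show ?thesis by simp
  next
    case False
    then have tp: "0 < t" using t by simp
    have tD: "ln t \<le> - 2 * (16*(1+1/l1)*S)"
      using t(2) tp unfolding S_def l1_def by (metis ln_exp ln_le_cancel_iff exp_gt_zero)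
    have goal: "\<bar>y t - y 0\<bar> \<le> 2 * K * t powr (l1/2)"
    proof (rule field_le_epsilon)
      fix e :: real assume e: "0 < e"
      define B where "B = 2 + 2 * K * t powr (l1/2)"
      have "0 \<le> 2 * K * t powr (l1/2)" using K0 by simp
      then have B0: "0 < B" unfolding B_def by linarith
      define e0 where "e0 = e / B"
      have e0: "0 < e0" unfolding e0_def using e B0 by simp
      obtain n c where app: "\<And>s. s \<in> {0..1} \<Longrightarrow> \<bar>y s - (\<Sum>i<n. c i * mpow (lam i) s)\<bar> < e0"
        using yM e0 unfolding muntz_space_def by blast
      define q where "q s = (\<Sum>k\<in>{1..<n}. c k * s powr lam k)" for s
      define c0 where "c0 = (if n = 0 then 0 else c 0)"
      have Ps: "(\<Sum>i<n. c i * mpow (lam i) s) = c0 + q s" for s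
        unfolding q_def c0_def by (rule P_split[where lam=lam, OF l0 lp])
      have q0: "q 0 = 0" unfolding q_def using lp by simp
      have qb: "\<bar>\<Sum>k\<in>{1..<n}. c k * s powr lam k\<bar> \<le> 2 + 2 * e0" if s: "s \<in> {0..1}" for s
      proof -
        have "\<bar>y s - (c0 + q s)\<bar> < e0" using app[OF s] Ps by simp
        moreover have "\<bar>y 0 - c0\<bar> < e0" using app[of 0] Ps[of 0] q0 by simp
        moreover have "\<bar>y s\<bar> \<le> 1" "\<bar>y 0\<bar> \<le> 1" using yb s by auto
        ultimately show ?thesis unfolding q_def[symmetric] by linarith
      qed
      have Ssum: "(\<Sum>k\<in>{1..<n}. 1 / lam k) \<le> S" unfolding S_def by (rule sum_inv_le[where lam=lam, OF summ lp])
      have kq: "\<bar>q t\<bar> \<le> K * (2 + 2 * e0) * t powr (l1/2)"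
        using key_finite[of "{1..<n}" l1 lam c "2 + 2 * e0" S t, OF finite_atLeastLessThan l1p lk[where n=n] qb Ssum S0 tp tD]
        unfolding q_def K_def by simp
      have "\<bar>y t - (c0 + q t)\<bar> < e0" using app[of t] Ps t t1 by simp
      moreover have "\<bar>y 0 - c0\<bar> < e0" using app[of 0] Ps[of 0] q0 by simp
      ultimately have "\<bar>y t - y 0\<bar> \<le> 2 * e0 + K * (2 + 2 * e0) * t powr (l1/2)" using kq by linarith
      also have "\<dots> = 2 * K * t powr (l1/2) + e0 * B" unfolding B_def by (simp add: algebra_simps)
      also have "e0 * B = e" unfolding e0_def using B0 by simp
      finally show "\<bar>y t - y 0\<bar> \<le> 2 * K * t powr (l1/2) + e" .
    qed
    then show ?thesis unfolding K_def S_def l1_def .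
  qed
qed

theorem mainTheorem3:
  fixes lam :: "nat \<Rightarrow> real"
  assumes "strict_mono lam"
    and "\<And>i. lam i \<ge> 0"
    and "lam 0 = 0"
    and "summable (\<lambda>i. 1 / lam (Suc i))"
  shows "\<not> locally_octahedral01 (muntz_space lam)"
proof
  assume H: "locally_octahedral01 (muntz_space lam)"
  note sm = assms(1) and l0 = assms(3) and summ = assms(4)
  define S where "S = suminf (\<lambda>i. 1 / lam (Suc i))"
  define l1 where "l1 = lam 1"
  define D where "D = 16*(1+1/l1)*S"
  define K where "K = sqrt 2 * exp (16*(1+1/l1)*S*(1+l1/2)) / (pi * (16*(1+1/l1)*S))"
  have lp: "0 < lam i" if "1 \<le> i" for i
    using sm l0 that by (metis strict_monoD le_less_trans not_one_le_zero zero_less_iff_neq_zero le_numeral_extra(4) gr0I)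
  have l1p: "0 < l1" unfolding l1_def using lp by simp
  have S0: "0 < S" unfolding S_def by (rule suminf_pos[OF summ]) (use lp in auto)
  have D0: "0 < D" unfolding D_def using l1p S0 by (simp add: add_pos_pos)
  have K0: "0 \<le> K" unfolding K_def using l1p S0 by simp
  define del where "del = min (1/4) (min (1/(4*K+1)) (exp (- D * l1)))"
  have "0 < 4*K+1" using K0 by simp
  then have "0 < 1/(4*K+1)" by simp
  then have del0: "0 < del" unfolding del_def by simp
  have del1: "del \<le> 1/4" "del \<le> 1/(4*K+1)" "del \<le> exp (- D * l1)" unfolding del_def by simp_all
  define ep where "ep = del^2"
  have ep0: "0 < ep" unfolding ep_def using del0 by simp
  have "del^2 \<le> (1/4)^2" using del1(1) del0 by (intro power_mono) auto
  then have ep1: "ep \<le> 1/16" unfolding ep_def by (simp add: power2_eq_square)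
  define x where "x s = 1 - s powr l1" for s :: real
  have xcont: "continuous_on {0..1} x"
    unfolding x_def using l1p by (intro continuous_intros continuous_on_powr') auto
  have xr: "0 \<le> x s" "x s \<le> 1" if "s \<in> {0..1}" for s
  proof -
    have "s powr l1 \<le> 1" using that l1p by (intro powr_le1) auto
    then show "0 \<le> x s" "x s \<le> 1" unfolding x_def by auto
  qed
  have xM: "x \<in> muntz_space lam"
    unfolding muntz_space_def
  proof (intro CollectI conjI allI impI xcont)
    fix e :: real assume e: "0 < e"
    have "lam 1 \<noteq> 0" using lp[of 1] by simp
    then have hh: "\<forall>t\<in>{0..1}. \<bar>x t - (\<Sum>i<2. (\<lambda>i. if i = 0 then 1 else -1) i * mpow (lam i) t)\<bar> < e"
      using e l0 by (simp add: x_def mpow_def numeral_2_eq_2 l1_def)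
    show "\<exists>(n::nat) (c::nat \<Rightarrow> real). \<forall>t\<in>{0..1}. \<bar>x t - (\<Sum>i<n. c i * mpow (lam i) t)\<bar> < e"
      by (rule exI[where x=2], rule exI[where x="\<lambda>i::nat. if i = 0 then 1 else -1 :: real"], rule hh)
  qed
  have bx: "bdd_above ((\<lambda>t. \<bar>x t\<bar>) ` {0..1})" by (rule bdd_abs_cont[OF xcont])
  have xn: "sup_norm01 x = 1"
    unfolding sup_norm01_def
  proof (rule antisym)
    show "(SUP t\<in>{0..1}. \<bar>x t\<bar>) \<le> 1" by (rule cSUP_least) (use xr in auto)
    have "\<bar>x 0\<bar> \<le> (SUP t\<in>{0..1}. \<bar>x t\<bar>)" by (rule cSUP_upper[OF _ bx]) simp
    then show "1 \<le> (SUP t\<in>{0..1}. \<bar>x t\<bar>)" unfolding x_def using l1p by simp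
  qed
  obtain y where yM: "y \<in> muntz_space lam" and yn: "sup_norm01 y = 1"
    and h1: "sup_norm01 (\<lambda>t. x t + y t) > 2 - ep" and h2: "sup_norm01 (\<lambda>t. x t - y t) > 2 - ep"
    using H xM xn ep0 unfolding locally_octahedral01_def by blast
  have ycont: "continuous_on {0..1} y" using yM unfolding muntz_space_def by simp
  have yb: "\<bar>y s\<bar> \<le> 1" if "s \<in> {0..1}" for s
    using cSUP_upper[OF that bdd_abs_cont[OF ycont]] yn unfolding sup_norm01_def by simp
  have bp: "bdd_above ((\<lambda>t. \<bar>x t + y t\<bar>) ` {0..1})"
    by (rule bdd_abs_cont) (intro continuous_intros xcont ycont)
  have bm: "bdd_above ((\<lambda>t. \<bar>x t - y t\<bar>) ` {0..1})"
    by (rule bdd_abs_cont) (intro continuous_intros xcont ycont)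
  have "\<exists>t\<in>{0..1}. 2 - ep < \<bar>x t + y t\<bar>"
    using h1 less_cSUP_iff[OF _ bp] unfolding sup_norm01_def by simp
  then obtain t where t: "t \<in> {0..1}" and ht: "2 - ep < \<bar>x t + y t\<bar>" by blast
  have "\<exists>t\<in>{0..1}. 2 - ep < \<bar>x t - y t\<bar>"
    using h2 less_cSUP_iff[OF _ bm] unfolding sup_norm01_def by simp
  then obtain s where s: "s \<in> {0..1}" and hs: "2 - ep < \<bar>x s - y s\<bar>" by blast
  have yt: "1 - ep < y t" and xt: "1 - ep < x t" using ht xr[OF t] yb[OF t] ep1 by (auto split: abs_split)
  have ys: "y s < -1 + ep" and xs: "1 - ep < x s" using hs xr[OF s] yb[OF s] ep1 by (auto split: abs_split)
  have small: "r powr (l1/2) < del" and rt0: "r \<le> exp (- 2 * D)" if r: "r \<in> {0..1}" "1 - ep < x r" for r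
  proof -
    have pr: "r powr l1 < del^2" using r(2) unfolding x_def ep_def by simp
    have "(r powr (l1/2))^2 = r powr l1" using r(1)
      by (simp add: powr_powr[symmetric] power2_eq_square powr_add[symmetric])
    then have "(r powr (l1/2))^2 < del^2" using pr by simp
    then show "r powr (l1/2) < del" using del0 by (simp add: power_less_imp_less_base less_imp_le)
    show "r \<le> exp (- 2 * D)"
    proof (rule ccontr)
      assume "\<not> r \<le> exp (- 2 * D)"
      then have "exp (- 2 * D) powr l1 \<le> r powr l1" using l1p by (intro powr_mono2) auto
      moreover have "exp (- 2 * D) powr l1 = exp (- D * l1)^2"
        by (simp add: powr_def power2_eq_square exp_add[symmetric])
      moreover have "del^2 \<le> exp (- D * l1)^2" using del1(3) del0 by (intro power_mono) auto
      ultimately show False using pr by linarith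
    qed
  qed
  have bt: "\<bar>y t - y 0\<bar> \<le> 2 * K * t powr (l1/2)"
    using M_bound[OF sm l0 summ yM yb, of t] t rt0[OF t xt] unfolding K_def D_def S_def l1_def by simp
  have bs: "\<bar>y s - y 0\<bar> \<le> 2 * K * s powr (l1/2)"
    using M_bound[OF sm l0 summ yM yb, of s] s rt0[OF s xs] unfolding K_def D_def S_def l1_def by simp
  have "2 * K * t powr (l1/2) \<le> 2 * K * del" using small[OF t xt] K0 by (intro mult_left_mono) auto
  moreover have "2 * K * s powr (l1/2) \<le> 2 * K * del" using small[OF s xs] K0 by (intro mult_left_mono) auto
  moreover have "4 * K * del < 1"
  proof -
    have "4 * K * del \<le> 4 * K * (1/(4*K+1))" using del1(2) K0 by (intro mult_left_mono) auto
    also have "\<dots> < 1" using K0 by (simp add: field_simps)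
    finally show ?thesis .
  qed
  ultimately show False using bt bs yt ys ep1 by linarith
qed


end
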